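(* Let $G$ be a group, $\mathbb{F}$ a field, and $\mathsf{a},\mathsf{b}\in\mathbb{F}[G]$ with $|supp(\mathsf{a})|=n$ and $\mathsf{a}\mathsf{b}=1$. Then every vertex of $U(\mathsf{a},\mathsf{b})$ has degree in $\{n-1,n,\dots,n(n-1)\}$. Moreover, $U(\mathsf{a},\mathsf{b})$ has at most one vertex of degree $n-1$.
   Context: $supp(\gamma)=\{x\in G:\gamma_x\ne0\}$. The unit graph $U(\mathsf{a},\mathsf{b})$ (for $\mathsf{a}\mathsf{b}=1$) is the multigraph with vertex set $supp(\mathsf{b})$ whose edges are the sets $\{(h,h',g,g'),(h',h,g',g)\}$ with $h,h'\in supp(\mathsf{a})$, $g,g'\in supp(\mathsf{b})$, $g\ne g'$, $hg=h'g'$; such an edge joins $g$ and $g'$. The degree of a vertex is the number of edges incident to it. *)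

theory Defs
  imports "HOL-Algebra.Group"
begin

definition supp :: "('g \<Rightarrow> 'f::zero) \<Rightarrow> 'g set" where
  "supp \<gamma> = {x. \<gamma> x \<noteq> 0}"

definition grp_alg_elem :: "('g, 'm) monoid_scheme \<Rightarrow> ('g \<Rightarrow> 'f::zero) \<Rightarrow> bool" where
  "grp_alg_elem G \<gamma> \<longleftrightarrow> finite (supp \<gamma>) \<and> supp \<gamma> \<subseteq> carrier G"

definition grp_alg_mult :: "('g, 'm) monoid_scheme \<Rightarrow> ('g \<Rightarrow> 'f::field) \<Rightarrow> ('g \<Rightarrow> 'f) \<Rightarrow> 'g \<Rightarrow> 'f" where
  "grp_alg_mult G a b x =
     (\<Sum>p\<in>{(h, g). h \<in> supp a \<and> g \<in> supp b \<and> h \<otimes>\<^bsub>G\<^esub> g = x}. a (fst p) * b (snd p))"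

definition grp_alg_one :: "('g, 'm) monoid_scheme \<Rightarrow> 'g \<Rightarrow> 'f::field" where
  "grp_alg_one G x = (if x = \<one>\<^bsub>G\<^esub> then 1 else 0)"

definition unit_graph_edges ::
  "('g, 'm) monoid_scheme \<Rightarrow> ('g \<Rightarrow> 'f::field) \<Rightarrow> ('g \<Rightarrow> 'f) \<Rightarrow> ('g \<times> 'g \<times> 'g \<times> 'g) set set" where
  "unit_graph_edges G a b =
     {{(h, h', g, g'), (h', h, g', g)} | h h' g g'.
        h \<in> supp a \<and> h' \<in> supp a \<and> g \<in> supp b \<and> g' \<in> supp b \<and> g \<noteq> g' \<and>
        h \<otimes>\<^bsub>G\<^esub> g = h' \<otimes>\<^bsub>G\<^esub> g'}"

text \<open>The edge {(h,h',g,g'),(h',h,g',g)} joins g and g'; a vertex v is incident to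
  an edge iff v is the third component of one of its two tuples.\<close>
definition unit_graph_degree ::
  "('g, 'm) monoid_scheme \<Rightarrow> ('g \<Rightarrow> 'f::field) \<Rightarrow> ('g \<Rightarrow> 'f) \<Rightarrow> 'g \<Rightarrow> nat" where
  "unit_graph_degree G a b v =
     card {e \<in> unit_graph_edges G a b. \<exists>h h' g'. (h, h', v, g') \<in> e}"

end

theory Submission
  imports Defs
begin

definition Tset :: "('g, 'm) monoid_scheme \<Rightarrow> ('g \<Rightarrow> 'f::field) \<Rightarrow> ('g \<Rightarrow> 'f) \<Rightarrow> 'g \<Rightarrow> ('g \<times> 'g \<times> 'g) set" where
  "Tset G a b v = {(h,h',g'). h \<in> supp a \<and> h' \<in> supp a \<and> g' \<in> supp b \<and> g' \<noteq> v \<and> h \<otimes>\<^bsub>G\<^esub> v = h' \<otimes>\<^bsub>G\<^esub> g'}"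

definition edgef :: "'g \<Rightarrow> 'g \<times> 'g \<times> 'g \<Rightarrow> ('g \<times> 'g \<times> 'g \<times> 'g) set" where
  "edgef v t = (case t of (h,h',g') \<Rightarrow> {(h,h',v,g'),(h',h,g',v)})"

lemma incident_eq:
  assumes vb: "v \<in> supp b"
  shows "{e \<in> unit_graph_edges G a b. \<exists>h h' g'. (h, h', v, g') \<in> e} = edgef v ` Tset G a b v"
proof
  show "{e \<in> unit_graph_edges G a b. \<exists>h h' g'. (h, h', v, g') \<in> e} \<subseteq> edgef v ` Tset G a b v"
  proof
    fix e assume "e \<in> {e \<in> unit_graph_edges G a b. \<exists>h h' g'. (h, h', v, g') \<in> e}"
    then obtain h h' g g' x y z where e: "e = {(h, h', g, g'), (h', h, g', g)}"
      and c: "h \<in> supp a" "h' \<in> supp a" "g \<in> supp b" "g' \<in> supp b" "g \<noteq> g'"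
        "h \<otimes>\<^bsub>G\<^esub> g = h' \<otimes>\<^bsub>G\<^esub> g'" and m: "(x,y,v,z) \<in> e"
      unfolding unit_graph_edges_def by blast
    from m e have "(g = v) \<or> (g' = v)" by auto
    then show "e \<in> edgef v ` Tset G a b v"
    proof
      assume "g = v"
      then have "(h,h',g') \<in> Tset G a b v" using c unfolding Tset_def by auto
      moreover have "e = edgef v (h,h',g')" using e \<open>g = v\<close> unfolding edgef_def by auto
      ultimately show ?thesis by blast
    next
      assume "g' = v"
      then have "(h',h,g) \<in> Tset G a b v" using c unfolding Tset_def by auto
      moreover have "e = edgef v (h',h,g)" using e \<open>g' = v\<close> unfolding edgef_def by auto
      ultimately show ?thesis by blast
    qed
  qed
next
  show "edgef v ` Tset G a b v \<subseteq> {e \<in> unit_graph_edges G a b. \<exists>h h' g'. (h, h', v, g') \<in> e}"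
  proof
    fix e assume "e \<in> edgef v ` Tset G a b v"
    then obtain h h' g' where t: "(h,h',g') \<in> Tset G a b v" and e: "e = edgef v (h,h',g')" by auto
    from t have c: "h \<in> supp a" "h' \<in> supp a" "g' \<in> supp b" "g' \<noteq> v"
        "h \<otimes>\<^bsub>G\<^esub> v = h' \<otimes>\<^bsub>G\<^esub> g'" unfolding Tset_def by auto
    show "e \<in> {e \<in> unit_graph_edges G a b. \<exists>h h' g'. (h, h', v, g') \<in> e}"
      using c e vb unfolding unit_graph_edges_def edgef_def by blast
  qed
qed

lemma edgef_inj: "inj_on (edgef v) (Tset G a b v)"
proof (rule inj_onI)
  fix x y assume x: "x \<in> Tset G a b v" and y: "y \<in> Tset G a b v" and eq: "edgef v x = edgef v y"
  obtain h1 h1' g1 where x1: "x = (h1,h1',g1)" "g1 \<noteq> v" using x unfolding Tset_def by auto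
  obtain h2 h2' g2 where y1: "y = (h2,h2',g2)" "g2 \<noteq> v" using y unfolding Tset_def by auto
  have "(h1,h1',v,g1) \<in> edgef v x" using x1 unfolding edgef_def by simp
  then have "(h1,h1',v,g1) \<in> {(h2,h2',v,g2),(h2',h2,g2,v)}" using eq y1 unfolding edgef_def by simp
  then show "x = y" using x1 y1 by auto
qed

lemma deg_eq:
  assumes "v \<in> supp b"
  shows "unit_graph_degree G a b v = card (Tset G a b v)"
  unfolding unit_graph_degree_def incident_eq[OF assms] by (rule card_image[OF edgef_inj])

lemma Tset_sub:
  assumes "group G" "supp a \<subseteq> carrier G" "supp b \<subseteq> carrier G" "v \<in> supp b"
  shows "Tset G a b v \<subseteq> (\<lambda>(h,h'). (h,h', inv\<^bsub>G\<^esub> h' \<otimes>\<^bsub>G\<^esub> h \<otimes>\<^bsub>G\<^esub> v)) ` (SIGMA h:supp a. supp a - {h})"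
proof
  interpret group G by fact
  fix t assume "t \<in> Tset G a b v"
  then obtain h h' g' where t: "t = (h,h',g')" and c: "h \<in> supp a" "h' \<in> supp a" "g' \<in> supp b" "g' \<noteq> v"
        "h \<otimes>\<^bsub>G\<^esub> v = h' \<otimes>\<^bsub>G\<^esub> g'" unfolding Tset_def by auto
  have car: "h \<in> carrier G" "h' \<in> carrier G" "g' \<in> carrier G" "v \<in> carrier G" using c assms by auto
  have "inv\<^bsub>G\<^esub> h' \<otimes>\<^bsub>G\<^esub> h \<otimes>\<^bsub>G\<^esub> v = inv\<^bsub>G\<^esub> h' \<otimes>\<^bsub>G\<^esub> (h \<otimes>\<^bsub>G\<^esub> v)"
    using car by (simp add: m_assoc)
  also have "\<dots> = inv\<^bsub>G\<^esub> h' \<otimes>\<^bsub>G\<^esub> (h' \<otimes>\<^bsub>G\<^esub> g')" using c(5) by simp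
  also have "\<dots> = g'" using car by (simp add: inv_solve_left m_assoc[symmetric])
  finally have g': "g' = inv\<^bsub>G\<^esub> h' \<otimes>\<^bsub>G\<^esub> h \<otimes>\<^bsub>G\<^esub> v" by simp
  have "h \<noteq> h'"
  proof
    assume "h = h'"
    then have "h \<otimes>\<^bsub>G\<^esub> v = h \<otimes>\<^bsub>G\<^esub> g'" using c(5) by simp
    then have "v = g'" using car by simp
    then show False using c(4) by simp
  qed
  then have "(h,h') \<in> (SIGMA h:supp a. supp a - {h})" using c by blast
  then show "t \<in> (\<lambda>(h,h'). (h,h', inv\<^bsub>G\<^esub> h' \<otimes>\<^bsub>G\<^esub> h \<otimes>\<^bsub>G\<^esub> v)) ` (SIGMA h:supp a. supp a - {h})"
    unfolding t g' by (rule rev_image_eqI) simp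
qed

lemma card_offdiag:
  assumes "finite A"
  shows "card (SIGMA h:A. A - {h}) = card A * (card A - 1)"
proof -
  have "card (SIGMA h:A. A - {h}) = (\<Sum>h\<in>A. card (A - {h}))" using assms by simp
  also have "\<dots> = (\<Sum>h\<in>A. card A - 1)" by (rule sum.cong) (auto simp: card_Diff_singleton assms)
  finally show ?thesis by simp
qed

lemma Tset_card_le:
  assumes "group G" "grp_alg_elem G a" "grp_alg_elem G b" "v \<in> supp b"
  shows "card (Tset G a b v) \<le> card (supp a) * (card (supp a) - 1)"
proof -
  have fa: "finite (supp a)" using assms(2) unfolding grp_alg_elem_def by auto
  have "card (Tset G a b v) \<le> card ((\<lambda>(h,h'). (h,h', inv\<^bsub>G\<^esub> h' \<otimes>\<^bsub>G\<^esub> h \<otimes>\<^bsub>G\<^esub> v)) ` (SIGMA h:supp a. supp a - {h}))"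
  proof (rule card_mono)
    show "finite ((\<lambda>(h,h'). (h,h', inv\<^bsub>G\<^esub> h' \<otimes>\<^bsub>G\<^esub> h \<otimes>\<^bsub>G\<^esub> v)) ` (SIGMA h:supp a. supp a - {h}))"
      using fa by (intro finite_imageI finite_SigmaI) auto
    have "supp a \<subseteq> carrier G" "supp b \<subseteq> carrier G" using assms(2,3) unfolding grp_alg_elem_def by auto
    then show "Tset G a b v \<subseteq> (\<lambda>(h,h'). (h,h', inv\<^bsub>G\<^esub> h' \<otimes>\<^bsub>G\<^esub> h \<otimes>\<^bsub>G\<^esub> v)) ` (SIGMA h:supp a. supp a - {h})"
      using Tset_sub[OF assms(1) _ _ assms(4)] by blast
  qed
  also have "\<dots> \<le> card (SIGMA h:supp a. supp a - {h})" by (rule card_image_le) (use fa in auto)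
  also have "\<dots> = card (supp a) * (card (supp a) - 1)" by (rule card_offdiag[OF fa])
  finally show ?thesis .
qed

lemma Tset_finite:
  assumes "grp_alg_elem G a" "grp_alg_elem G b"
  shows "finite (Tset G a b v)"
proof -
  have "Tset G a b v \<subseteq> supp a \<times> supp a \<times> supp b" unfolding Tset_def by auto
  moreover have "finite (supp a \<times> supp a \<times> supp b)" using assms unfolding grp_alg_elem_def by auto
  ultimately show ?thesis by (rule finite_subset)
qed

lemma key:
  fixes a b :: "'g \<Rightarrow> 'f::field"
  assumes "group G" "grp_alg_elem G a" "grp_alg_elem G b" "grp_alg_mult G a b = grp_alg_one G"
    and hs: "h \<in> supp a" and vs: "v \<in> supp b" and ne: "h \<otimes>\<^bsub>G\<^esub> v \<noteq> \<one>\<^bsub>G\<^esub>"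
  shows "h \<in> fst ` Tset G a b v"
proof (rule ccontr)
  interpret group G by fact
  assume nin: "h \<notin> fst ` Tset G a b v"
  define x where "x = h \<otimes>\<^bsub>G\<^esub> v"
  define P where "P = {(h, g). h \<in> supp a \<and> g \<in> supp b \<and> h \<otimes>\<^bsub>G\<^esub> g = x}"
  have sa: "supp a \<subseteq> carrier G" and sb: "supp b \<subseteq> carrier G" using assms(2,3) unfolding grp_alg_elem_def by auto
  have "P = {(h, v)}"
  proof
    show "{(h, v)} \<subseteq> P" using hs vs unfolding P_def x_def by auto
    show "P \<subseteq> {(h, v)}"
    proof
      fix p assume "p \<in> P"
      then obtain h' g' where p: "p = (h',g')" "h' \<in> supp a" "g' \<in> supp b" "h' \<otimes>\<^bsub>G\<^esub> g' = x"
        unfolding P_def by auto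
      have "g' = v"
      proof (rule ccontr)
        assume "g' \<noteq> v"
        then have "(h,h',g') \<in> Tset G a b v" using p hs unfolding Tset_def x_def by auto
        then show False using nin by force
      qed
      then have "h' \<otimes>\<^bsub>G\<^esub> v = h \<otimes>\<^bsub>G\<^esub> v" using p x_def by simp
      then have "h' = h" using sa sb hs vs p(2) by (meson right_cancel subsetD)
      then show "p \<in> {(h, v)}" using p \<open>g' = v\<close> by simp
    qed
  qed
  then have "grp_alg_mult G a b x = a h * b v" unfolding grp_alg_mult_def P_def by simp
  moreover have "a h * b v \<noteq> 0" using hs vs unfolding supp_def by simp
  moreover have "grp_alg_one G x = (0::'f)" using ne unfolding grp_alg_one_def x_def by simp
  ultimately show False using assms(4) by simp
qed

lemma supp_ne:
  fixes a b :: "'g \<Rightarrow> 'f::field"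
  assumes "grp_alg_mult G a b = grp_alg_one G"
  shows "supp a \<noteq> {}"
proof
  assume "supp a = {}"
  then have "grp_alg_mult G a b \<one>\<^bsub>G\<^esub> = 0" unfolding grp_alg_mult_def by simp
  moreover have "grp_alg_one G \<one>\<^bsub>G\<^esub> = (1::'f)" unfolding grp_alg_one_def by simp
  ultimately show False using assms by simp
qed

lemma lower:
  fixes a b :: "'g \<Rightarrow> 'f::field"
  assumes "group G" "grp_alg_elem G a" "grp_alg_elem G b" "grp_alg_mult G a b = grp_alg_one G"
    and vs: "v \<in> supp b"
  shows "card (supp a) - 1 \<le> card (Tset G a b v)"
proof -
  interpret group G by fact
  have sa: "supp a \<subseteq> carrier G" and sb: "supp b \<subseteq> carrier G" using assms(2,3) unfolding grp_alg_elem_def by auto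
  have sub: "supp a - {inv\<^bsub>G\<^esub> v} \<subseteq> fst ` Tset G a b v"
  proof
    fix h assume h: "h \<in> supp a - {inv\<^bsub>G\<^esub> v}"
    have "h \<otimes>\<^bsub>G\<^esub> v \<noteq> \<one>\<^bsub>G\<^esub>"
    proof
      assume "h \<otimes>\<^bsub>G\<^esub> v = \<one>\<^bsub>G\<^esub>"
      then have "inv\<^bsub>G\<^esub> v = h" using h sa sb vs by (meson DiffD1 inv_equality subsetD)
      then show False using h by simp
    qed
    then show "h \<in> fst ` Tset G a b v" using key[OF assms(1-4)] h vs by blast
  qed
  have "card (supp a) - 1 \<le> card (supp a - {inv\<^bsub>G\<^esub> v})" by (simp add: card_Diff_singleton_if)
  also have "\<dots> \<le> card (fst ` Tset G a b v)"
    by (rule card_mono[OF _ sub]) (use Tset_finite[OF assms(2,3)] in blast)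
  also have "\<dots> \<le> card (Tset G a b v)" by (rule card_image_le[OF Tset_finite[OF assms(2,3)]])
  finally show ?thesis .
qed

lemma low_deg:
  fixes a b :: "'g \<Rightarrow> 'f::field"
  assumes "group G" "grp_alg_elem G a" "grp_alg_elem G b" "grp_alg_mult G a b = grp_alg_one G"
    and vs: "v \<in> supp b" and cd: "card (Tset G a b v) = card (supp a) - 1"
    and h's: "h' \<in> supp a" and g's: "g' \<in> supp b" and one: "h' \<otimes>\<^bsub>G\<^esub> g' = \<one>\<^bsub>G\<^esub>"
  shows "g' = v"
proof (rule ccontr)
  interpret group G by fact
  assume gv: "g' \<noteq> v"
  have sa: "supp a \<subseteq> carrier G" and sb: "supp b \<subseteq> carrier G" and fa: "finite (supp a)"
    using assms(2,3) unfolding grp_alg_elem_def by auto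
  have sub: "supp a \<subseteq> fst ` Tset G a b v"
  proof
    fix h assume h: "h \<in> supp a"
    show "h \<in> fst ` Tset G a b v"
    proof (cases "h \<otimes>\<^bsub>G\<^esub> v = \<one>\<^bsub>G\<^esub>")
      case True
      then have "(h,h',g') \<in> Tset G a b v" using h h's g's gv one unfolding Tset_def by simp
      then show ?thesis by force
    next
      case False
      then show ?thesis using key[OF assms(1-4) h vs] by blast
    qed
  qed
  have "card (supp a) \<le> card (fst ` Tset G a b v)"
    by (rule card_mono[OF _ sub]) (use Tset_finite[OF assms(2,3)] in blast)
  also have "\<dots> \<le> card (Tset G a b v)" by (rule card_image_le[OF Tset_finite[OF assms(2,3)]])
  finally have "card (supp a) \<le> card (supp a) - 1" using cd by simp
  moreover have "card (supp a) > 0" using supp_ne[OF assms(4)] fa by (simp add: card_gt_0_iff)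
  ultimately show False by simp
qed

theorem mainTheorem9:
  fixes G :: "('g, 'm) monoid_scheme" and a b :: "'g \<Rightarrow> 'f::field" and n :: nat
  assumes "group G"
    and "grp_alg_elem G a" and "grp_alg_elem G b"
    and "card (supp a) = n"
    and "grp_alg_mult G a b = grp_alg_one G"
  shows "(\<forall>v \<in> supp b. unit_graph_degree G a b v \<in> {n - 1 .. n * (n - 1)})
         \<and> card {v \<in> supp b. unit_graph_degree G a b v = n - 1} \<le> 1"
proof
  show "\<forall>v \<in> supp b. unit_graph_degree G a b v \<in> {n - 1 .. n * (n - 1)}"
  proof
    fix v assume vs: "v \<in> supp b"
    show "unit_graph_degree G a b v \<in> {n - 1 .. n * (n - 1)}"
      using deg_eq[where G=G and a=a, OF vs] lower[OF assms(1,2,3,5) vs] Tset_card_le[OF assms(1,2,3) vs] assms(4) by simp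
  qed
next
  interpret group G by fact
  have sa: "supp a \<subseteq> carrier G" and sb: "supp b \<subseteq> carrier G" and fb: "finite (supp b)"
    using assms(2,3) unfolding grp_alg_elem_def by auto
  let ?S = "{v \<in> supp b. unit_graph_degree G a b v = n - 1}"
  have "\<forall>x\<in>?S. \<forall>y\<in>?S. x = y"
  proof (intro ballI)
    fix x y assume x: "x \<in> ?S" and y: "y \<in> ?S"
    have cx: "card (Tset G a b x) = card (supp a) - 1" using x deg_eq[where G=G and a=a] assms(4) by auto
    have cy: "card (Tset G a b y) = card (supp a) - 1" using y deg_eq[where G=G and a=a] assms(4) by auto
    have xs: "x \<in> supp b" and ys: "y \<in> supp b" using x y by auto
    have ic: "inv\<^bsub>G\<^esub> y \<in> supp a"
    proof (rule ccontr)
      assume ni: "inv\<^bsub>G\<^esub> y \<notin> supp a"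
      have "supp a \<subseteq> fst ` Tset G a b y"
      proof
        fix h assume h: "h \<in> supp a"
        have "h \<otimes>\<^bsub>G\<^esub> y \<noteq> \<one>\<^bsub>G\<^esub>"
        proof
          assume "h \<otimes>\<^bsub>G\<^esub> y = \<one>\<^bsub>G\<^esub>"
          then have "inv\<^bsub>G\<^esub> y = h" using h sa sb ys by (meson inv_equality subsetD)
          then show False using h ni by simp
        qed
        then show "h \<in> fst ` Tset G a b y" using key[OF assms(1,2,3,5) h ys] by blast
      qed
      then have "card (supp a) \<le> card (fst ` Tset G a b y)"
        by (rule card_mono[rotated]) (use Tset_finite[OF assms(2,3)] in blast)
      also have "\<dots> \<le> card (Tset G a b y)" by (rule card_image_le[OF Tset_finite[OF assms(2,3)]])
      finally have "card (supp a) \<le> card (supp a) - 1" using cy by simp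
      moreover have "card (supp a) > 0" using supp_ne[OF assms(5)] assms(2)
        unfolding grp_alg_elem_def by (simp add: card_gt_0_iff)
      ultimately show False by simp
    qed
    have "inv\<^bsub>G\<^esub> y \<otimes>\<^bsub>G\<^esub> y = \<one>\<^bsub>G\<^esub>" using ys sb by (meson l_inv subsetD)
    then have "y = x" using low_deg[OF assms(1,2,3,5) xs cx ic ys] by simp
    then show "x = y" by simp
  qed
  then show "card ?S \<le> 1" using card_le_Suc0_iff_eq[of ?S] fb by simp
qed

end
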